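(* In the atomic model under the Shapley scheme with exactly one large player of stake $a$ and all other players of stake $1$, if the total number of players satisfies $n\ge (2h-1)^2+h$, then the Price of Stability is at most $2$.
   Context: Atomic model with threshold $h$: $n$ players, one of stake $a$ and $n-1$ of stake $1$, where $h,a$ are integers with $2\le a\le h-1$. Each player opens her own pool or joins one; pools partition the players; a pool $S$ has reward $\rho(S)=1$ if its total stake is at least $h$ (winning) and $0$ otherwise. Shapley scheme: player $i$ in pool $S$ receives $\phi_i(S)=\sum_{T\subseteq S\setminus\{i\}}\frac{|T|!(|S|-|T|-1)!}{|S|!}(\rho(T\cup\{i\})-\rho(T))$. A partition into winning pools is a Nash equilibrium if no player can strictly increase her payment by moving to another pool of the partition or opening a new pool alone. $OPT(G)$ is the maximum number of pools of stake at least $h$ in a partition of the players; $W(\Pi)$ is the number of winning pools of $\Pi$; the Price of Stability is $\min_\Pi OPT(G)/W(\Pi)$ over Nash equilibrium partitions. *)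

theory Defs
  imports Complex_Main "HOL-Library.Disjoint_Sets"
begin

definition players :: "nat \<Rightarrow> nat set" where
  "players n = {0..<n}"

definition stake :: "nat \<Rightarrow> nat \<Rightarrow> nat" where
  "stake a i = (if i = 0 then a else 1)"

definition pool_stake :: "nat \<Rightarrow> nat set \<Rightarrow> nat" where
  "pool_stake a S = (\<Sum>i\<in>S. stake a i)"

definition rho :: "nat \<Rightarrow> nat \<Rightarrow> nat set \<Rightarrow> real" where
  "rho h a S = (if pool_stake a S \<ge> h then 1 else 0)"

definition winning :: "nat \<Rightarrow> nat \<Rightarrow> nat set \<Rightarrow> bool" where
  "winning h a S \<longleftrightarrow> pool_stake a S \<ge> h"

definition shapley :: "nat \<Rightarrow> nat \<Rightarrow> nat \<Rightarrow> nat set \<Rightarrow> real" where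
  "shapley h a i S =
     (\<Sum>T\<in>Pow (S - {i}).
        (fact (card T) * fact (card S - card T - 1) / fact (card S))
        * (rho h a (insert i T) - rho h a T))"

definition is_NE :: "nat \<Rightarrow> nat \<Rightarrow> nat \<Rightarrow> nat set set \<Rightarrow> bool" where
  "is_NE n h a P \<longleftrightarrow>
     partition_on (players n) P \<and>
     (\<forall>S\<in>P. winning h a S) \<and>
     (\<forall>S\<in>P. \<forall>i\<in>S.
        (\<forall>S'\<in>P. S' \<noteq> S \<longrightarrow> shapley h a i (insert i S') \<le> shapley h a i S) \<and>
        shapley h a i {i} \<le> shapley h a i S)"

definition W :: "nat \<Rightarrow> nat \<Rightarrow> nat set set \<Rightarrow> nat" where
  "W h a P = card {S\<in>P. winning h a S}"

definition OPT :: "nat \<Rightarrow> nat \<Rightarrow> nat \<Rightarrow> nat" where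
  "OPT n h a = Max {W h a P | P. partition_on (players n) P}"

definition PoS :: "nat \<Rightarrow> nat \<Rightarrow> nat \<Rightarrow> real" where
  "PoS n h a = Min {real (OPT n h a) / real (W h a P) | P. is_NE n h a P}"

end

theory Submission
  imports Defs
begin

lemma sum_pow_card:
  assumes "finite A"
  shows "(\<Sum>T\<in>Pow A. g (card T)) = (\<Sum>t\<le>card A. real (card A choose t) * (g t :: real))"
proof -
  have "(\<Sum>T\<in>Pow A. g (card T)) = (\<Sum>t\<le>card A. \<Sum>T\<in>{T. T \<in> Pow A \<and> card T = t}. g (card T))"
    by (rule sum.group[symmetric]) (use assms card_mono in auto)
  also have "\<dots> = (\<Sum>t\<le>card A. real (card A choose t) * g t)"
  proof (rule sum.cong[OF refl])
    fix t assume "t \<in> {..card A}"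
    have "(\<Sum>T\<in>{T. T \<in> Pow A \<and> card T = t}. g (card T)) = (\<Sum>T\<in>{T. T \<in> Pow A \<and> card T = t}. g t)"
      by (rule sum.cong) auto
    also have "\<dots> = real (card {T. T \<subseteq> A \<and> card T = t}) * g t" by simp
    also have "\<dots> = real (card A choose t) * g t" using n_subsets[OF assms] by simp
    finally show "(\<Sum>T\<in>{T. T \<in> Pow A \<and> card T = t}. g (card T)) = real (card A choose t) * g t" .
  qed
  finally show ?thesis .
qed

lemma wt_lemma:
  assumes "t < s"
  shows "real ((s - 1) choose t) * (fact t * fact (s - t - 1) / fact s) = 1 / real s"
proof -
  have "t \<le> s - 1" using assms by simp
  from binomial_fact_lemma[OF this]
  have e: "fact t * fact (s - 1 - t) * real ((s - 1) choose t) = (fact (s - 1) :: real)"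
    by (metis of_nat_fact of_nat_mult)
  obtain s' where s: "s = Suc s'" using assms by (cases s) auto
  have "(fact s :: real) = real s * fact (s - 1)" by (simp add: s fact_Suc)
  then show ?thesis using e assms
    by (simp add: field_simps)
qed

lemma stake_units:
  assumes "finite T" "0 \<notin> T"
  shows "pool_stake a T = card T"
proof -
  have "(\<Sum>i\<in>T. stake a i) = (\<Sum>i\<in>T. 1)"
    by (rule sum.cong) (use assms in \<open>auto simp: stake_def\<close>)
  then show ?thesis unfolding pool_stake_def by simp
qed

lemma stake_insert:
  assumes "finite T" "i \<notin> T"
  shows "pool_stake a (insert i T) = stake a i + pool_stake a T"
  using assms unfolding pool_stake_def by simp

lemma sum_ind: "(\<Sum>t\<le>(N::nat). f t * (if t = c then 1 else 0)) = (if c \<le> N then f c else (0::real))"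
proof -
  have "(\<Sum>t\<le>N. f t * (if t = c then 1 else 0)) = (\<Sum>t\<le>N. if t = c then f t else 0)"
    by (rule sum.cong) auto
  also have "\<dots> = (if c \<in> {..N} then f c else 0)" by (rule sum.delta) simp
  finally show ?thesis by simp
qed

lemma shap_gen:
  assumes "finite S" "i \<in> S"
    and "\<And>T. T \<subseteq> S - {i} \<Longrightarrow> rho h a (insert i T) - rho h a T = \<delta> (card T)"
  shows "shapley h a i S = (\<Sum>t\<le>card S - 1. (real (card S - 1 choose t)
            * (fact t * fact (card S - t - 1) / fact (card S))) * \<delta> t)"
proof -
  have "shapley h a i S = (\<Sum>T\<in>Pow (S - {i}). (\<lambda>t. (fact t * fact (card S - t - 1) / fact (card S)) * \<delta> t) (card T))"
    unfolding shapley_def by (rule sum.cong) (use assms(3) in auto)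
  also have "\<dots> = (\<Sum>t\<le>card (S - {i}). real (card (S - {i}) choose t) * ((fact t * fact (card S - t - 1) / fact (card S)) * \<delta> t))"
    by (rule sum_pow_card) (use assms in auto)
  also have "card (S - {i}) = card S - 1" using assms by simp
  finally show ?thesis by (simp only: mult.assoc)
qed

lemma shap_unit_pure:
  assumes "finite S" "i \<in> S" "i \<noteq> 0" "0 \<notin> S" "h \<le> card S" "1 \<le> h"
  shows "shapley h a i S = 1 / real (card S)"
proof -
  have "shapley h a i S = (\<Sum>t\<le>card S - 1. (real (card S - 1 choose t)
            * (fact t * fact (card S - t - 1) / fact (card S))) * (if t = h - 1 then 1 else 0))"
  proof (rule shap_gen[OF assms(1,2)])
    fix T assume T: "T \<subseteq> S - {i}"
    then have fT: "finite T" "0 \<notin> T" "i \<notin> T" using assms finite_subset by auto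
    have "pool_stake a (insert i T) = 1 + card T"
      using stake_insert[OF fT(1,3)] stake_units[OF fT(1,2)] assms(3) by (simp add: stake_def)
    then show "rho h a (insert i T) - rho h a T = (if card T = h - 1 then 1 else 0)"
      unfolding rho_def using stake_units[OF fT(1,2)] assms(6) by auto
  qed
  also have "\<dots> = (if h - 1 \<le> card S - 1 then real (card S - 1 choose (h - 1)) * (fact (h - 1) * fact (card S - (h - 1) - 1) / fact (card S)) else 0)"
    by (rule sum_ind)
  also have "\<dots> = real (card S - 1 choose (h - 1)) * (fact (h - 1) * fact (card S - (h - 1) - 1) / fact (card S))"
    using assms(5,6) by simp
  also have "\<dots> = 1 / real (card S)" by (rule wt_lemma) (use assms in auto)
  finally show ?thesis .
qed

lemma shap_big:
  assumes "finite S" "0 \<in> S" "card S = m + 1"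
  shows "shapley h a 0 S = real (card {t. t \<le> m \<and> h \<le> a + t \<and> t < h}) / real (m + 1)"
proof -
  have "shapley h a 0 S = (\<Sum>t\<le>card S - 1. (real (card S - 1 choose t)
            * (fact t * fact (card S - t - 1) / fact (card S))) * (if h \<le> a + t \<and> t < h then 1 else 0))"
  proof (rule shap_gen[OF assms(1,2)])
    fix T assume T: "T \<subseteq> S - {0}"
    then have fT: "finite T" "0 \<notin> T" using assms finite_subset by auto
    have "pool_stake a (insert 0 T) = a + card T"
      using stake_insert[OF fT(1,2)] stake_units[OF fT(1,2)] by (simp add: stake_def)
    then show "rho h a (insert 0 T) - rho h a T = (if h \<le> a + card T \<and> card T < h then 1 else 0)"
      unfolding rho_def using stake_units[OF fT(1,2)] by auto
  qed
  also have "\<dots> = (\<Sum>t\<le>m. (1 / real (m + 1)) * (if h \<le> a + t \<and> t < h then 1 else 0))"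
  proof (rule sum.cong)
    fix t assume "t \<in> {..m}"
    then have "t < m + 1" using assms by auto
    from wt_lemma[OF this] show "(real (card S - 1 choose t)
            * (fact t * fact (card S - t - 1) / fact (card S))) * (if h \<le> a + t \<and> t < h then 1 else 0)
        = (1 / real (m + 1)) * (if h \<le> a + t \<and> t < h then 1 else 0)"
      using assms by simp
  qed (use assms in simp)
  also have "\<dots> = (1 / real (m + 1)) * (\<Sum>t\<le>m. (if h \<le> a + t \<and> t < h then 1 else 0))"
    by (simp add: sum_distrib_left)
  also have "(\<Sum>t\<le>m. (if h \<le> a + t \<and> t < h then 1 else (0::real))) = (\<Sum>t\<in>{t\<in>{..m}. h \<le> a + t \<and> t < h}. 1)"
    by (rule sum.inter_filter[symmetric]) simp
  also have "{t\<in>{..m}. h \<le> a + t \<and> t < h} = {t. t \<le> m \<and> h \<le> a + t \<and> t < h}" by auto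
  finally show ?thesis by simp
qed

lemma cf1:
  assumes "t \<le> k"
  shows "real (k choose t) * (fact t * fact (Suc k + 1 - t - 1) / fact (Suc k + 1)) = real (Suc k - t) / (real (Suc k) * real (Suc k + 1))"
proof -
  from binomial_fact_lemma[OF assms]
  have e: "fact t * fact (k - t) * real (k choose t) = (fact k :: real)"
    by (metis of_nat_fact of_nat_mult)
  have f1: "(fact (Suc k + 1 - t - 1) :: real) = real (Suc k - t) * fact (k - t)"
    using assms by (simp add: Suc_diff_le fact_Suc)
  have f2: "(fact (Suc k + 1) :: real) = real (Suc k + 1) * real (Suc k) * fact k"
    by (simp add: fact_Suc)
  have "real (k choose t) * (fact t * fact (Suc k + 1 - t - 1) / fact (Suc k + 1))
     = real (Suc k - t) * (fact t * fact (k - t) * real (k choose t)) / (real (Suc k + 1) * real (Suc k) * fact k)"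
    unfolding f1 f2 by (simp add: algebra_simps)
  also have "\<dots> = (real (Suc k - t) * fact k) / ((real (Suc k) * real (Suc k + 1)) * fact k)"
    unfolding e by (simp add: mult_ac)
  also have "\<dots> = real (Suc k - t) / (real (Suc k) * real (Suc k + 1))"
    by (rule nonzero_mult_divide_mult_cancel_right) simp
  finally show ?thesis .
qed

lemma cf2:
  assumes "t \<le> k"
  shows "real (k choose t) * (fact (t + 1) * fact (Suc k + 1 - (t + 1) - 1) / fact (Suc k + 1)) = real (t + 1) / (real (Suc k) * real (Suc k + 1))"
proof -
  from binomial_fact_lemma[OF assms]
  have e: "fact t * fact (k - t) * real (k choose t) = (fact k :: real)"
    by (metis of_nat_fact of_nat_mult)
  have f1: "(fact (Suc k + 1 - (t + 1) - 1) :: real) = fact (k - t)"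
    using assms by simp
  have f0: "(fact (t + 1) :: real) = real (t + 1) * fact t"
    by (simp add: fact_Suc)
  have f2: "(fact (Suc k + 1) :: real) = real (Suc k + 1) * real (Suc k) * fact k"
    by (simp add: fact_Suc)
  have "real (k choose t) * (fact (t + 1) * fact (Suc k + 1 - (t + 1) - 1) / fact (Suc k + 1))
     = real (t + 1) * (fact t * fact (k - t) * real (k choose t)) / (real (Suc k + 1) * real (Suc k) * fact k)"
    unfolding f0 f1 f2 by (simp add: algebra_simps)
  also have "\<dots> = (real (t + 1) * fact k) / ((real (Suc k) * real (Suc k + 1)) * fact k)"
    unfolding e by (simp add: mult_ac)
  also have "\<dots> = real (t + 1) / (real (Suc k) * real (Suc k + 1))"
    by (rule nonzero_mult_divide_mult_cancel_right) simp
  finally show ?thesis .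
qed
lemma sum_ind2: "(\<Sum>t\<le>(N::nat). g t * (f t * (if t = c then 1 else 0))) = (if c \<le> N then g c * f c else (0::real))"
proof -
  have "(\<Sum>t\<le>(N::nat). g t * (f t * (if t = c then 1 else 0))) = (\<Sum>t\<le>(N::nat). (g t * f t) * (if t = c then 1 else 0))"
    by (rule sum.cong) auto
  also have "\<dots> = (if c \<le> N then g c * f c else (0::real))" by (rule sum_ind)
  finally show ?thesis .
qed

definition uu :: "nat \<Rightarrow> nat \<Rightarrow> nat \<Rightarrow> real" where
  "uu h a m = ((if h \<le> m then real (m + 1 - h) else 0) + (if h - a \<le> m then real (h - a) else 0)) / (real m * real (m + 1))"

lemma shap_unit_mixed:
  assumes "finite S" "i \<in> S" "i \<noteq> 0" "0 \<in> S" "card S = Suc k + 1" "a < h"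
  shows "shapley h a i S = uu h a (Suc k)"
proof -
  define A where "A = S - {i} - {0}"
  have fA: "finite A" "0 \<notin> A" "i \<notin> A" using assms by (auto simp: A_def)
  have cA: "card A = k" using assms unfolding A_def by (simp add: card_Diff_subset_Int)
  have SA: "S - {i} = insert 0 A" using assms by (auto simp: A_def)
  define F where "F = (\<lambda>T. fact (card T) * fact (card S - card T - 1) / fact (card S) * (rho h a (insert i T) - rho h a T) :: real)"
  define w1 where "w1 = (\<lambda>t. fact t * fact (Suc k + 1 - t - 1) / fact (Suc k + 1) :: real)"
  define w2 where "w2 = (\<lambda>t. fact (t + 1) * fact (Suc k + 1 - (t + 1) - 1) / fact (Suc k + 1) :: real)"
  have "shapley h a i S = sum F (Pow (insert 0 A))" unfolding shapley_def F_def SA ..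
  also have "\<dots> = sum F (Pow A \<union> insert 0 ` Pow A)" by (simp add: Pow_insert)
  also have "\<dots> = sum F (Pow A) + sum F (insert 0 ` Pow A)"
    by (rule sum.union_disjoint) (use fA in auto)
  also have "sum F (insert 0 ` Pow A) = sum (F \<circ> insert 0) (Pow A)"
  proof (rule sum.reindex, rule inj_onI)
    fix X Y assume "X \<in> Pow A" "Y \<in> Pow A" "insert 0 X = insert 0 Y"
    then show "X = Y" using fA(2) insert_ident[of 0 X Y] by blast
  qed
  also have "sum F (Pow A) = (\<Sum>T\<in>Pow A. (\<lambda>t. w1 t * (if t = h - 1 then 1 else 0)) (card T))"
  proof (rule sum.cong[OF refl])
    fix T assume "T \<in> Pow A"
    then have fT: "finite T" "0 \<notin> T" "i \<notin> T" using fA finite_subset by auto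
    have "pool_stake a (insert i T) = 1 + card T"
      using stake_insert[OF fT(1,3)] stake_units[OF fT(1,2)] assms(3) by (simp add: stake_def)
    then have "rho h a (insert i T) - rho h a T = (if card T = h - 1 then 1 else 0)"
      unfolding rho_def using stake_units[OF fT(1,2)] assms(6) by auto
    then show "F T = (\<lambda>t. w1 t * (if t = h - 1 then 1 else 0)) (card T)"
      unfolding F_def w1_def assms(5) by simp
  qed
  also have "\<dots> = (\<Sum>t\<le>k. real (k choose t) * (w1 t * (if t = h - 1 then 1 else 0)))"
    using sum_pow_card[OF fA(1)] cA by simp
  also have "\<dots> = (if h - 1 \<le> k then real (k choose (h - 1)) * w1 (h - 1) else 0)"
    by (rule sum_ind2)
  also have "sum (F \<circ> insert 0) (Pow A) = (\<Sum>T\<in>Pow A. (\<lambda>t. w2 t * (if t = h - 1 - a then 1 else 0)) (card T))"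
  proof (rule sum.cong[OF refl])
    fix T assume "T \<in> Pow A"
    then have fT: "finite T" "0 \<notin> T" "i \<notin> T" using fA finite_subset by auto
    have i0: "i \<notin> insert 0 T" using fT assms(3) by auto
    have s0: "pool_stake a (insert 0 T) = a + card T"
      using stake_insert[OF fT(1,2)] stake_units[OF fT(1,2)] by (simp add: stake_def)
    have "pool_stake a (insert i (insert 0 T)) = 1 + (a + card T)"
      using stake_insert[OF _ i0] s0 fT(1) assms(3) by (simp add: stake_def)
    then have "rho h a (insert i (insert 0 T)) - rho h a (insert 0 T) = (if card T = h - 1 - a then 1 else 0)"
      unfolding rho_def using s0 assms(6) by auto
    moreover have "card (insert 0 T) = card T + 1" using fT by simp
    ultimately show "(F \<circ> insert 0) T = (\<lambda>t. w2 t * (if t = h - 1 - a then 1 else 0)) (card T)"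
      unfolding F_def w2_def assms(5) by simp
  qed
  also have "\<dots> = (\<Sum>t\<le>k. real (k choose t) * (w2 t * (if t = h - 1 - a then 1 else 0)))"
    using sum_pow_card[OF fA(1)] cA by simp
  also have "\<dots> = (if h - 1 - a \<le> k then real (k choose (h - 1 - a)) * w2 (h - 1 - a) else 0)"
    by (rule sum_ind2)
  finally have e: "shapley h a i S = (if h - 1 \<le> k then real (k choose (h - 1)) * w1 (h - 1) else 0)
     + (if h - 1 - a \<le> k then real (k choose (h - 1 - a)) * w2 (h - 1 - a) else 0)" .
  have e1: "(if h - 1 \<le> k then real (k choose (h - 1)) * w1 (h - 1) else 0)
     = (if h \<le> Suc k then real (Suc k + 1 - h) else 0) / (real (Suc k) * real (Suc k + 1))"
    using cf1[of "h - 1" k] assms(6) unfolding w1_def by (auto simp: Suc_diff_le)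
  have e2: "(if h - 1 - a \<le> k then real (k choose (h - 1 - a)) * w2 (h - 1 - a) else 0)
     = (if h - a \<le> Suc k then real (h - a) else 0) / (real (Suc k) * real (Suc k + 1))"
    using cf2[of "h - 1 - a" k] assms(6) unfolding w2_def by auto
  show ?thesis unfolding e e1 e2 uu_def by (simp add: add_divide_distrib)
qed
lemma shap_single:
  assumes "stake a i < h"
  shows "shapley h a i {i} = 0"
proof -
  have "Pow ({i} - {i}) = {{}}" by auto
  moreover have "pool_stake a {i} = stake a i" by (simp add: pool_stake_def)
  ultimately show ?thesis using assms unfolding shapley_def rho_def by (simp add: pool_stake_def)
qed

lemma split_blocks:
  assumes "finite R" "card R = k * q + r" "r \<le> k" "1 \<le> q"
  shows "\<exists>Q. partition_on R Q \<and> card Q = k \<and> (\<forall>X\<in>Q. card X = q \<or> card X = q + 1)"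
  using assms
proof (induction k arbitrary: R r)
  case 0
  then have "R = {}" by simp
  then show ?case by (intro exI[of _ "{}"]) (simp add: partition_on_empty)
next
  case (Suc k)
  define c where "c = (if r > 0 then q + 1 else q)"
  define r' where "r' = (if r > 0 then r - 1 else 0)"
  have cR: "card R = c + (k * q + r')" using Suc.prems unfolding c_def r'_def by auto
  then obtain X where X: "X \<subseteq> R" "card X = c" "finite X"
    using obtain_subset_with_card_n[of c R] by auto
  have cRX: "card (R - X) = k * q + r'" using cR X Suc.prems(1) by (simp add: card_Diff_subset)
  have "r' \<le> k" using Suc.prems unfolding r'_def by auto
  from Suc.IH[OF _ cRX this Suc.prems(4)] Suc.prems(1)
  obtain Q where Q: "partition_on (R - X) Q" "card Q = k" "\<forall>X\<in>Q. card X = q \<or> card X = q + 1"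
    by auto
  have XU: "disjnt X (\<Union>Q)" using partition_onD1[OF Q(1)] by (auto simp: disjnt_def)
  have Xne: "X \<noteq> {}" using X Suc.prems(4) unfolding c_def by (auto split: if_splits)
  have "partition_on R (insert X Q)"
    using partition_on_insert[OF XU] Q(1) X Xne by auto
  moreover have "X \<notin> Q" using XU Xne by (auto simp: disjnt_def)
  moreover have "finite Q" using partition_onD1[OF Q(1)] Suc.prems(1) finite_UnionD
    by (metis finite_Diff)
  ultimately show ?case using Q X unfolding c_def
    by (intro exI[of _ "insert X Q"]) (auto split: if_splits)
qed
lemma frac_aux: "(A::real) / D < 1 / S \<Longrightarrow> 0 < D \<Longrightarrow> 0 < S \<Longrightarrow> A * S < D"
  by (simp add: field_simps)

lemma card_piv:
  assumes "a < h" "h - a \<le> m"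
  shows "card {t. t \<le> m \<and> h \<le> a + t \<and> t < h} = min m (h - 1) + 1 - (h - a)"
proof -
  have "{t. t \<le> m \<and> h \<le> a + t \<and> t < h} = {h - a..min m (h - 1)}" using assms by auto
  then show ?thesis by simp
qed

lemma mstar:
  assumes "2 \<le> a" "a \<le> h - 1"
  obtains ms where "1 \<le> ms" "h - a \<le> ms" "ms \<le> 2*h - 2"
    "uu h a ms \<ge> 1 / real (2*h - 1)" "uu h a (ms + 1) < 1 / real (2*h - 1)"
    "real (card {t. t \<le> ms \<and> h \<le> a + t \<and> t < h}) / real (ms + 1) \<ge> real a / real (2*h - 1)"
proof -
  define M where "M = {m. 1 \<le> m \<and> m \<le> 2*h - 2 \<and> uu h a m \<ge> 1 / real (2*h - 1)}"
  have h3: "3 \<le> h" using assms by simp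
  have u0: "uu h a (h - a) = 1 / real (h - a + 1)"
    using assms unfolding uu_def by (simp add: of_nat_diff)
  have "1 / real (h - a + 1) \<ge> 1 / real (2*h - 1)"
    using assms by (intro divide_left_mono) auto
  then have inM: "h - a \<in> M" using assms u0 unfolding M_def by auto
  have fM: "finite M" unfolding M_def by auto
  define ms where "ms = Max M"
  have msM: "ms \<in> M" unfolding ms_def using fM inM by (intro Max_in) auto
  have ms_ge: "h - a \<le> ms" unfolding ms_def using fM inM by simp
  have ms_max: "m \<in> M \<Longrightarrow> m \<le> ms" for m unfolding ms_def using fM by simp
  have P1: "1 \<le> ms" "ms \<le> 2*h - 2" "uu h a ms \<ge> 1 / real (2*h - 1)" using msM unfolding M_def by auto
  have P2: "uu h a (ms + 1) < 1 / real (2*h - 1)"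
  proof (cases "ms + 1 \<le> 2*h - 2")
    case True
    then have "ms + 1 \<notin> M" using ms_max by fastforce
    then show ?thesis using True unfolding M_def by auto
  next
    case False
    then have e: "ms + 1 = 2*h - 1" using P1 h3 by simp
    have q1: "h \<le> 2*h - 1" "h - a \<le> 2*h - 1" using h3 by auto
    have q2: "real (2 * h - 1 + 1 - h) + real (h - a) = real (2*h - a)" using assms h3 by (simp add: of_nat_diff)
    have "uu h a (2*h - 1) = real (2*h - a) / (real (2*h - 1) * real (2*h))"
      unfolding uu_def using q1 q2 h3 by (simp del: of_nat_add)
    also have "\<dots> < 1 / real (2*h - 1)"
      using assms h3 by (simp add: field_simps of_nat_diff)
    finally show ?thesis using e by simp
  qed
  have P3: "real (card {t. t \<le> ms \<and> h \<le> a + t \<and> t < h}) / real (ms + 1) \<ge> real a / real (2*h - 1)"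
  proof (cases "h - 1 \<le> ms")
    case True
    then have "card {t. t \<le> ms \<and> h \<le> a + t \<and> t < h} = a"
      using card_piv[of a h ms] assms ms_ge by simp
    moreover have "real a / real (2*h - 1) \<le> real a / real (ms + 1)"
      using P1 h3 by (intro divide_left_mono) auto
    ultimately show ?thesis by simp
  next
    case False
    define x where "x = ms + 1"
    have x: "x \<le> h - 1" "h - a \<le> x" "1 \<le> x" "\<not> h \<le> x" using False ms_ge unfolding x_def by auto
    have c: "card {t. t \<le> ms \<and> h \<le> a + t \<and> t < h} = x - (h - a)"
      using card_piv[of a h ms] assms ms_ge False unfolding x_def by simp
    have "uu h a x = real (h - a) / (real x * real (x + 1))"
      using x unfolding uu_def by simp
    then have "real (h - a) / (real x * real (x + 1)) < 1 / real (2*h - 1)" using P2 x_def by simp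
    then have "real (h - a) * real (2*h - 1) < real x * real (x + 1)"
      by (rule frac_aux) (use x h3 in auto)
    then have i1: "(h - a) * (2*h - 1) < x * (x + 1)" by (metis of_nat_less_iff of_nat_mult)
    have "x + 1 \<le> 2*h - 1 - a" using x assms by simp
    then have "x * (x + 1) \<le> x * (2*h - 1 - a)" by (rule mult_left_mono) simp
    with i1 have "(h - a) * (2*h - 1) + a * x < x * (2*h - 1)"
      using assms h3 by (simp add: diff_mult_distrib2 algebra_simps)
    then have "a * x \<le> (x - (h - a)) * (2*h - 1)" using x by (simp add: diff_mult_distrib algebra_simps)
    then have "real a * real x \<le> real (x - (h - a)) * real (2*h - 1)" by (metis of_nat_le_iff of_nat_mult)
    then show ?thesis unfolding c x_def[symmetric] using x h3 by (simp add: field_simps)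
  qed
  show ?thesis using that P1 P2 P3 ms_ge by blast
qed
lemma partition_sub_pow: "partition_on A P \<Longrightarrow> P \<subseteq> Pow A"
  using partition_onD1 by blast

lemma W_bound:
  assumes "partition_on (players n) P" "1 \<le> n"
  shows "h * W h a P \<le> a + (n - 1)"
proof -
  have fin: "finite (players n)" by (simp add: players_def)
  have fP: "finite P" using partition_sub_pow[OF assms(1)] fin
    by (meson finite_Pow_iff finite_subset)
  define Pw where "Pw = {S\<in>P. winning h a S}"
  have "h * W h a P = (\<Sum>S\<in>Pw. h)" unfolding W_def Pw_def by simp
  also have "\<dots> \<le> (\<Sum>S\<in>Pw. pool_stake a S)"
    by (rule sum_mono) (simp add: Pw_def winning_def)
  also have "\<dots> \<le> (\<Sum>S\<in>P. pool_stake a S)"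
    by (rule sum_mono2) (use fP in \<open>auto simp: Pw_def\<close>)
  also have "\<dots> = pool_stake a (players n)"
    unfolding pool_stake_def by (rule sum.partition[symmetric]) (use fin assms in auto)
  also have "players n = insert 0 {1..<n}" using assms(2) by (auto simp: players_def)
  also have "pool_stake a (insert 0 {1..<n}) = a + (n - 1)"
    using stake_insert[of "{1..<n}" 0 a] stake_units[of "{1..<n}" a] by (simp add: stake_def)
  finally show ?thesis .
qed



lemma good_NE:
  fixes n h a :: nat
  assumes "2 \<le> a" and "a \<le> h - 1"
    and "n \<ge> (2 * h - 1)^2 + h"
  shows "\<exists>P. is_NE n h a P \<and> a + (n - 1) \<le> 2 * h * W h a P"
proof -
  have h3: "3 \<le> h" using assms by simp
  obtain ms where ms: "1 \<le> ms" "h - a \<le> ms" "ms \<le> 2*h - 2"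
    "uu h a ms \<ge> 1 / real (2*h - 1)" "uu h a (ms + 1) < 1 / real (2*h - 1)"
    "real (card {t. t \<le> ms \<and> h \<le> a + t \<and> t < h}) / real (ms + 1) \<ge> real a / real (2*h - 1)"
    using mstar[OF assms(1,2)] by blast
  define q where "q = 2*h - 2"
  define B0 where "B0 = {0..ms}"
  define R where "R = {ms+1..<n}"
  define L where "L = n - (ms + 1)"
  define k where "k = L div q"
  define r where "r = L mod q"
  have big: "q * (q - 1) + (2*h - 1) \<le> (2 * h - 1)^2 + h"
  proof -
    obtain h' where "h = h' + 3" using h3 by (metis add.commute le_Suc_ex)
    then show ?thesis unfolding q_def by (simp add: algebra_simps power2_eq_square)
  qed
  have Lq: "q * (q - 1) \<le> L"
  proof -
    have t0: "q * (q - 1) + (2*h - 1) \<le> n" using big assms(3) by linarith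
    have t1: "ms + 1 \<le> 2*h - 1" using ms(3) h3 by arith
    have "q * (q - 1) + (ms + 1) \<le> n" using t0 t1 by linarith
    then show ?thesis unfolding L_def by linarith
  qed
  have qpos: "1 \<le> q" using h3 unfolding q_def by simp
  have kq: "q - 1 \<le> k"
  proof -
    have "(q * (q - 1)) div q \<le> L div q" using Lq by (rule div_le_mono)
    then show ?thesis using qpos unfolding k_def by simp
  qed
  have rk: "r \<le> k"
  proof -
    have "r < q" unfolding r_def using qpos by simp
    then show ?thesis using kq by linarith
  qed
  have Lkr: "L = k * q + r" unfolding k_def r_def by simp
  have ms_n: "ms + 1 \<le> n"
  proof -
    have t0: "q * (q - 1) + (2*h - 1) \<le> n" using big assms(3) by linarith
    have t1: "ms + 1 \<le> 2*h - 1" using ms(3) h3 by arith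
    show ?thesis using t0 t1 by linarith
  qed
  have cR: "card R = L" unfolding R_def L_def by simp
  obtain Q where Q: "partition_on R Q" "card Q = k" "\<forall>X\<in>Q. card X = q \<or> card X = q + 1"
    using split_blocks[of R k q r] cR Lkr rk qpos unfolding R_def by auto
  have QR: "\<Union>Q = R" using partition_onD1[OF Q(1)] by simp
  have Xsub: "X \<in> Q \<Longrightarrow> X \<subseteq> R" for X using QR by blast
  have X0: "X \<in> Q \<Longrightarrow> 0 \<notin> X" for X using Xsub unfolding R_def by force
  have Xfin: "X \<in> Q \<Longrightarrow> finite X" for X using Xsub unfolding R_def by (meson finite_atLeastLessThan finite_subset)
  have Xc: "X \<in> Q \<Longrightarrow> 2*h - 2 \<le> card X \<and> card X \<le> 2*h - 1" for X using Q(3) h3 unfolding q_def by force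
  have Xdisj: "X \<in> Q \<Longrightarrow> Y \<in> Q \<Longrightarrow> X \<noteq> Y \<Longrightarrow> i \<in> X \<Longrightarrow> i \<notin> Y" for X Y i
    using partition_onD2[OF Q(1)] unfolding disjoint_def by blast
  have B0Q: "B0 \<notin> Q"
  proof
    assume "B0 \<in> Q"
    then have "0 \<notin> B0" by (rule X0)
    then show False unfolding B0_def by simp
  qed
  define P where "P = insert B0 Q"
  have pl: "players n = B0 \<union> R" unfolding players_def B0_def R_def using ms_n by auto
  have part: "partition_on (players n) P"
  proof -
    have d: "disjnt B0 (\<Union>Q)" unfolding QR B0_def R_def by (auto simp: disjnt_def)
    have "players n - B0 = R" unfolding pl B0_def R_def by auto
    then show ?thesis unfolding P_def using partition_on_insert[OF d] Q(1) pl unfolding B0_def by auto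
  qed
  have cB0: "card B0 = Suc (ms - 1) + 1" unfolding B0_def using ms(1) by simp
  have stB0: "pool_stake a B0 = a + ms"
  proof -
    have "B0 = insert 0 {1..ms}" unfolding B0_def by auto
    then show ?thesis using stake_insert[of "{1..ms}" 0 a] stake_units[of "{1..ms}" a] by (simp add: stake_def)
  qed
  define uB where "uB = uu h a ms"
  define bB where "bB = real (card {t. t \<le> ms \<and> h \<le> a + t \<and> t < h}) / real (ms + 1)"
  have sig: "0 < real (2*h - 1)" using h3 by simp
  have uBpos: "1 / real (2*h - 1) \<le> uB" using ms(4) unfolding uB_def .
  have bBge: "real a / real (2*h - 1) \<le> bB" using ms(6) unfolding bB_def .
  have vB_unit: "i \<in> B0 \<Longrightarrow> i \<noteq> 0 \<Longrightarrow> shapley h a i B0 = uB" for i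
    using shap_unit_mixed[of B0 i "ms - 1" a h] cB0 assms ms(1) unfolding uB_def B0_def by simp
  have vB_big: "shapley h a 0 B0 = bB"
    using shap_big[of B0 ms h a] unfolding bB_def B0_def by simp
  have vX: "X \<in> Q \<Longrightarrow> i \<in> X \<Longrightarrow> shapley h a i X = 1 / real (card X)" for X i
  proof -
    assume a1: "X \<in> Q" "i \<in> X"
    have "h \<le> card X" using Xc[OF a1(1)] h3 by arith
    moreover have "i \<noteq> 0" using X0[OF a1(1)] a1(2) by (metis gr0I)
    ultimately show ?thesis using shap_unit_pure[of X i h a] Xfin[OF a1(1)] X0[OF a1(1)] a1(2) h3 by simp
  qed
  have vXge: "X \<in> Q \<Longrightarrow> 1 / real (2*h - 1) \<le> 1 / real (card X)" for X
    using Xc[of X] h3 by (intro divide_left_mono) auto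
  have dev_unit_X: "X \<in> Q \<Longrightarrow> i \<notin> X \<Longrightarrow> i \<noteq> 0 \<Longrightarrow> shapley h a i (insert i X) \<le> 1 / real (2*h - 1)" for X i
  proof -
    assume a1: "X \<in> Q" "i \<notin> X" "i \<noteq> 0"
    have c: "card (insert i X) = card X + 1" using a1 Xfin by simp
    have "shapley h a i (insert i X) = 1 / real (card X + 1)"
    proof -
      have "h \<le> card (insert i X)" using Xc[OF a1(1)] h3 c by arith
      moreover have "0 \<notin> insert i X" using X0[OF a1(1)] a1(3) by auto
      ultimately show ?thesis using shap_unit_pure[of "insert i X" i h a] Xfin[OF a1(1)] a1(3) h3 c by simp
    qed
    also have "\<dots> \<le> 1 / real (2*h - 1)" using Xc[OF a1(1)] h3 by (intro divide_left_mono) auto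
    finally show ?thesis .
  qed
  have dev_big_X: "X \<in> Q \<Longrightarrow> shapley h a 0 (insert 0 X) \<le> real a / real (2*h - 1)" for X
  proof -
    assume a1: "X \<in> Q"
    have c: "card (insert 0 X) = card X + 1" using a1 Xfin X0 by simp
    have "shapley h a 0 (insert 0 X) = real (card {t. t \<le> card X \<and> h \<le> a + t \<and> t < h}) / real (card X + 1)"
      using shap_big[of "insert 0 X" "card X" h a] a1 Xfin c by simp
    also have "card {t. t \<le> card X \<and> h \<le> a + t \<and> t < h} = a"
    proof -
      have m1: "h - a \<le> card X" "min (card X) (h - 1) = h - 1" "a < h" using Xc[OF a1] h3 assms by auto
      then show ?thesis using card_piv[of a h "card X"] by simp
    qed
    also have "real a / real (card X + 1) \<le> real a / real (2*h - 1)"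
    proof (rule divide_left_mono)
      have "2*h - 1 \<le> card X + 1" using Xc[OF a1] h3 by arith
      then show "real (2*h - 1) \<le> real (card X + 1)" by (simp only: of_nat_le_iff)
    qed (use h3 in auto)
    finally show ?thesis .
  qed
  have dev_unit_B: "i \<notin> B0 \<Longrightarrow> shapley h a i (insert i B0) < 1 / real (2*h - 1)" for i
  proof -
    assume a1: "i \<notin> B0"
    have c: "card (insert i B0) = Suc ms + 1" using a1 cB0 ms(1) unfolding B0_def by simp
    have "shapley h a i (insert i B0) = uu h a (Suc ms)"
      using shap_unit_mixed[of "insert i B0" i ms a h] a1 c assms unfolding B0_def by auto
    then show ?thesis using ms(5) by simp
  qed
  have win: "\<forall>S\<in>P. winning h a S"
  proof
    fix S assume "S \<in> P"
    then consider "S = B0" | "S \<in> Q" unfolding P_def by auto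
    then show "winning h a S"
    proof cases
      case 1
      then show ?thesis unfolding winning_def using stB0 ms(2) by simp
    next
      case 2
      have "2*h - 2 \<le> card S" using Xc[OF 2] by simp
      moreover have "pool_stake a S = card S" using stake_units[of S a] Xfin[OF 2] X0[OF 2] by simp
      ultimately show ?thesis unfolding winning_def using h3 by simp
    qed
  qed
  have dev: "\<forall>S\<in>P. \<forall>i\<in>S. (\<forall>S'\<in>P. S' \<noteq> S \<longrightarrow> shapley h a i (insert i S') \<le> shapley h a i S) \<and>
          shapley h a i {i} \<le> shapley h a i S"
  proof (intro ballI)
    fix S i assume S: "S \<in> P" and i: "i \<in> S"
    have st: "stake a i < h" using assms unfolding stake_def by auto
    show "(\<forall>S'\<in>P. S' \<noteq> S \<longrightarrow> shapley h a i (insert i S') \<le> shapley h a i S) \<and>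
          shapley h a i {i} \<le> shapley h a i S"
    proof (cases "S = B0")
      case True
      show ?thesis
      proof (cases "i = 0")
        case True
        have "0 \<le> bB" by (rule order_trans[OF _ bBge]) simp
        then show ?thesis using \<open>S = B0\<close> True vB_big dev_big_X bBge shap_single[OF st] unfolding P_def
          by (auto intro: order_trans)
      next
        case False
        have u0: "0 \<le> uB" by (rule order_trans[OF _ uBpos]) simp
        have own: "shapley h a i S = uB" using vB_unit \<open>S = B0\<close> False i by simp
        have "shapley h a i (insert i S') \<le> shapley h a i S" if "S' \<in> P" "S' \<noteq> S" for S'
        proof -
          have S'Q: "S' \<in> Q" using that \<open>S = B0\<close> unfolding P_def by auto
          have "i \<notin> S'" using Xsub[OF S'Q] i \<open>S = B0\<close> unfolding R_def B0_def by auto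
          then have "shapley h a i (insert i S') \<le> 1 / real (2*h - 1)" by (rule dev_unit_X[OF S'Q _ False])
          then have "shapley h a i (insert i S') \<le> uB" using uBpos by (rule order_trans)
          then show ?thesis using own by simp
        qed
        then show ?thesis using own u0 shap_single[OF st] by auto
      qed
    next
      case False
      then have SQ: "S \<in> Q" using S unfolding P_def by auto
      have "i \<in> R" using Xsub[OF SQ] i by blast
      then have i0: "i \<noteq> 0" "i \<notin> B0" unfolding R_def B0_def by auto
      have own: "shapley h a i S = 1 / real (card S)" using vX SQ i by simp
      have ge: "1 / real (2*h - 1) \<le> shapley h a i S" using own vXge SQ by simp
      have "0 \<le> shapley h a i S" using own by simp
      moreover have "shapley h a i (insert i S') \<le> shapley h a i S" if "S' \<in> P" "S' \<noteq> S" for S'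
      proof (cases "S' = B0")
        case True
        then show ?thesis using dev_unit_B[OF i0(2)] ge by simp
      next
        case False
        then have "S' \<in> Q" using that unfolding P_def by auto
        have "i \<notin> S'" using Xdisj[OF SQ \<open>S' \<in> Q\<close> _ i] that(2) by metis
        then have "shapley h a i (insert i S') \<le> 1 / real (2*h - 1)" by (rule dev_unit_X[OF \<open>S' \<in> Q\<close> _ i0(1)])
        then show ?thesis using ge by (rule order_trans)
      qed
      ultimately show ?thesis using shap_single[OF st] by auto
    qed
  qed
  have NE: "is_NE n h a P" unfolding is_NE_def using part win dev by blast
  have WP: "W h a P = k + 1"
  proof -
    have "{S\<in>P. winning h a S} = P" using NE unfolding is_NE_def by auto
    moreover have "finite Q" using QR finite_UnionD unfolding R_def by (metis finite_atLeastLessThan)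
    ultimately show ?thesis unfolding W_def P_def using B0Q Q(2) by simp
  qed
  have "a + (n - 1) \<le> 2 * h * (k + 1)"
  proof -
    obtain h' where hh: "h = h' + 3" using h3 by (metis add.commute le_Suc_ex)
    have e: "n - 1 = ms + L" using ms_n unfolding L_def by simp
    have L1: "L \<le> k * (2*h' + 5)" using Lkr rk unfolding q_def hh by (simp add: algebra_simps)
    have k1: "2*h' + 3 \<le> k" using kq unfolding q_def hh by simp
    have m1: "ms \<le> 2*h' + 4" using ms(3) unfolding hh by simp
    have a1: "a \<le> h' + 2" using assms(2) unfolding hh by simp
    have x1: "k * (2*h' + 5) = 2*(k*h') + 5*k" by (simp add: algebra_simps)
    have x2: "2 * h * (k + 1) = 2*(k*h') + 2*h' + 6*k + 6" unfolding hh by (simp add: algebra_simps)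
    show ?thesis unfolding x2 e using L1 k1 m1 a1 x1 by linarith
  qed
  then show ?thesis using NE WP by auto
qed


theorem theorem3p10:
  fixes n h a :: nat
  assumes "2 \<le> a" and "a \<le> h - 1"
    and "n \<ge> (2 * h - 1)^2 + h"
  shows "(\<exists>P. is_NE n h a P) \<and> PoS n h a \<le> 2"
proof -
  obtain P where P: "is_NE n h a P" "a + (n - 1) \<le> 2 * h * W h a P"
    using good_NE[OF assms] by blast
  have h3: "3 \<le> h" using assms by simp
  have n1: "1 \<le> n" using assms(3) h3 by (simp add: le_trans[OF _ assms(3)])
  have partP: "partition_on (players n) P" using P(1) unfolding is_NE_def by simp
  have finparts: "finite {P'. partition_on (players n) P'}"
  proof (rule finite_subset)
    show "{P'. partition_on (players n) P'} \<subseteq> Pow (Pow (players n))"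
      using partition_sub_pow by blast
  qed (simp add: players_def)
  have OPTle: "OPT n h a \<le> 2 * W h a P"
    unfolding OPT_def
  proof (subst Max_le_iff)
    show "finite {W h a P' |P'. partition_on (players n) P'}"
      using finparts by (rule finite_image_set)
    show "{W h a P' |P'. partition_on (players n) P'} \<noteq> {}" using partP by blast
    show "\<forall>x\<in>{W h a P' |P'. partition_on (players n) P'}. x \<le> 2 * W h a P"
    proof
      fix x assume "x \<in> {W h a P' |P'. partition_on (players n) P'}"
      then obtain P' where P': "partition_on (players n) P'" "x = W h a P'" by blast
      have "h * x \<le> a + (n - 1)" using W_bound[OF P'(1) n1, of h a] P'(2) by simp
      also have "\<dots> \<le> h * (2 * W h a P)" using P(2) by (simp add: algebra_simps)
      finally have "h * x \<le> h * (2 * W h a P)" .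
      then show "x \<le> 2 * W h a P" using h3 by simp
    qed
  qed
  have Wpos: "0 < W h a P" using P(2) assms(1) by (metis le_zero_eq mult_0_right not_gr0 add_is_0 zero_neq_numeral)
  have "PoS n h a \<le> real (OPT n h a) / real (W h a P)"
    unfolding PoS_def
  proof (rule Min_le)
    have "finite {P'. is_NE n h a P'}"
      by (rule finite_subset[OF _ finparts]) (auto simp: is_NE_def)
    then show "finite {real (OPT n h a) / real (W h a P') |P'. is_NE n h a P'}"
      by (rule finite_image_set)
    show "real (OPT n h a) / real (W h a P) \<in> {real (OPT n h a) / real (W h a P') |P'. is_NE n h a P'}"
      using P(1) by blast
  qed
  also have "\<dots> \<le> 2"
  proof -
    have "real (OPT n h a) \<le> 2 * real (W h a P)" using OPTle by (metis of_nat_le_iff of_nat_mult of_nat_numeral)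
    then show ?thesis using Wpos by (simp add: divide_le_eq)
  qed
  finally show ?thesis using P(1) by blast
qed

end
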